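(* Let $d\ge2$, let $\mathcal{F}$ be a finite constraint family, and let $\phi$ be a $\mathrm{SAT}(\mathcal{F})$ formula on variables $x_1,\dots,x_n$. Let $F_d$ be the set of all assignments of weight at most $d$ that violate some constraint of $\phi$. Define $$\phi_d=\bigwedge_{a\in F_d}\mathrm{NAND}(\mathrm{ones}(a)),$$ where $\mathrm{NAND}(\mathrm{ones}(a))$ is the constraint that not all variables in $\mathrm{ones}(a)$ are $1$. Then the following hold. (P1) If $\mathcal{F}$ avoids $\mathrm{NAND}_{d+1}$, then every satisfying assignment of $\phi_d$ is a satisfying assignment of $\phi$. (P2) If $a$ is a $d$-robust satisfying assignment of $\phi$, then $a$ satisfies $\phi_d$.
   Context: A $\mathrm{SAT}(\mathcal{F})$ formula is a conjunction of constraints $f(x_{i_1},\dots,x_{i_r})$ with $f\in\mathcal{F}$ and $i_j\in[n]$ not necessarily distinct. For an assignment $a:[n]\to\{0,1\}$, its weight is $\sum_i a(i)$, and $\mathrm{ones}(a)=\{x_i: a(i)=1\}$. We write $a'\le a$ if $a'(i)\le a(i)$ for all $i$. A weight-$k$ assignment $a$ satisfying $\phi$ is $d$-robust if no assignment $a'\le a$ of weight at most $d$ violates $\phi$. $\mathrm{NAND}_{d+1}(y_1,\dots,y_{d+1})=\overline{y_1\wedge\cdots\wedge y_{d+1}}$. $\mathcal{F}$ avoids $\mathrm{NAND}_{d+1}$ if no $f\in\mathcal{F}$ has it as a restriction. A restriction of $f:\{0,1\}^r\to\{0,1\}$ is obtained by choosing pairwise disjoint, possibly empty, sets $X_1,\dots,X_s,Z_0,Z_1$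 with union $[r]$, and substituting the new argument $x_j$ at the positions in $X_j$, $0$ at the positions in $Z_0$, and $1$ at the positions in $Z_1$. *)

theory Defs
  imports Main
begin

(* A constraint (Boolean function) f : {0,1}^r -> {0,1} is a pair (r, f);
   Booleans encode {0,1} (True = 1); f is only consulted on lists of length r. *)
type_synonym constr = "nat \<times> (bool list \<Rightarrow> bool)"

(* A SAT(F) formula: a list of constraint applications f(x_{i_1},...,x_{i_r}),
   variables x_1..x_n are indexed by 0..n-1. *)
type_synonym formula = "(constr \<times> nat list) list"

definition wf_formula :: "constr set \<Rightarrow> nat \<Rightarrow> formula \<Rightarrow> bool" where
  "wf_formula F n \<phi> = (\<forall>((r, f), idx) \<in> set \<phi>. (r, f) \<in> F \<and> length idx = r \<and> set idx \<subseteq> {..<n})"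

definition assignment :: "nat \<Rightarrow> (nat \<Rightarrow> bool) \<Rightarrow> bool" where
  "assignment n a = (\<forall>i. n \<le> i \<longrightarrow> \<not> a i)"

definition ones :: "nat \<Rightarrow> (nat \<Rightarrow> bool) \<Rightarrow> nat set" where
  "ones n a = {i. i < n \<and> a i}"

definition weight :: "nat \<Rightarrow> (nat \<Rightarrow> bool) \<Rightarrow> nat" where
  "weight n a = card (ones n a)"

definition le_assign :: "(nat \<Rightarrow> bool) \<Rightarrow> (nat \<Rightarrow> bool) \<Rightarrow> bool" where
  "le_assign a' a = (\<forall>i. a' i \<longrightarrow> a i)"

definition sat_constraint :: "(nat \<Rightarrow> bool) \<Rightarrow> constr \<times> nat list \<Rightarrow> bool" where
  "sat_constraint a c = (case c of ((r, f), idx) \<Rightarrow> f (map a idx))"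

definition satisfies :: "(nat \<Rightarrow> bool) \<Rightarrow> formula \<Rightarrow> bool" where
  "satisfies a \<phi> = (\<forall>c \<in> set \<phi>. sat_constraint a c)"

definition robust :: "nat \<Rightarrow> nat \<Rightarrow> formula \<Rightarrow> (nat \<Rightarrow> bool) \<Rightarrow> bool" where
  "robust n d \<phi> a = (satisfies a \<phi> \<and>
     (\<forall>a'. assignment n a' \<and> le_assign a' a \<and> weight n a' \<le> d \<longrightarrow> satisfies a' \<phi>))"

definition Fd :: "nat \<Rightarrow> nat \<Rightarrow> formula \<Rightarrow> (nat \<Rightarrow> bool) set" where
  "Fd n d \<phi> = {a. assignment n a \<and> weight n a \<le> d \<and> \<not> satisfies a \<phi>}"

definition nand_sat :: "(nat \<Rightarrow> bool) \<Rightarrow> nat set \<Rightarrow> bool" where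
  "nand_sat a S = (\<not> (\<forall>i \<in> S. a i))"

(* phi_d = conjunction of NAND(ones(a)) over a in F_d, represented by its set of NAND scopes *)
definition phi_d :: "nat \<Rightarrow> nat \<Rightarrow> formula \<Rightarrow> nat set set" where
  "phi_d n d \<phi> = ones n ` Fd n d \<phi>"

definition satisfies_nands :: "(nat \<Rightarrow> bool) \<Rightarrow> nat set set \<Rightarrow> bool" where
  "satisfies_nands a \<psi> = (\<forall>S \<in> \<psi>. nand_sat a S)"

definition NAND :: "nat \<Rightarrow> constr" where
  "NAND m = (m, \<lambda>ys. \<not> (\<forall>y \<in> set ys. y))"

(* (s,g) is a restriction of (r,f): each position p < r is mapped either to a new
   argument x_j (Inl j, j < s) or to a constant (Inr c); this encodes the pairwise
   disjoint sets X_1..X_s, Z_0, Z_1 covering [r]. *)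
definition is_restriction :: "constr \<Rightarrow> constr \<Rightarrow> bool" where
  "is_restriction c g = (case c of (r, f) \<Rightarrow> case g of (s, h) \<Rightarrow>
     (\<exists>\<sigma> :: nat \<Rightarrow> nat + bool.
        (\<forall>p < r. case \<sigma> p of Inl j \<Rightarrow> j < s | Inr _ \<Rightarrow> True) \<and>
        (\<forall>ys. length ys = s \<longrightarrow>
           h ys = f (map (\<lambda>p. case \<sigma> p of Inl j \<Rightarrow> ys ! j | Inr b \<Rightarrow> b) [0..<r]))))"

definition avoids :: "constr set \<Rightarrow> constr \<Rightarrow> bool" where
  "avoids F g = (\<not> (\<exists>c \<in> F. is_restriction c g))"

end

theory Submission
  imports Defs
begin

lemma map_idx: "map (\<lambda>p. h (xs ! p)) [0..<length xs] = map h xs"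
  by (rule nth_equalityI) auto

lemma min_set:
  assumes "finite A" "P A"
  obtains T where "T \<subseteq> A" "P T" "\<And>T'. T' \<subset> T \<Longrightarrow> \<not> P T'"
proof -
  define Q where "Q m = (\<exists>T. T \<subseteq> A \<and> P T \<and> card T = m)" for m
  define k where "k = (LEAST m. Q m)"
  have "Q (card A)" using assms unfolding Q_def by blast
  then have "Q k" unfolding k_def by (rule LeastI)
  then have k: "\<exists>T. T \<subseteq> A \<and> P T \<and> card T = k" unfolding Q_def .
  have kmin: "k \<le> m" if "\<exists>T. T \<subseteq> A \<and> P T \<and> card T = m" for m
    unfolding k_def by (rule Least_le) (use that in \<open>simp add: Q_def\<close>)
  from k obtain T where T: "T \<subseteq> A" "P T" "card T = k" by blast
  show ?thesis
  proof (rule that[OF T(1,2)])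
    fix T' assume "T' \<subset> T"
    show "\<not> P T'"
    proof
    assume "P T'"
    with \<open>T' \<subset> T\<close> have "card T' < card T" using T(1) assms(1)
      by (meson psubset_card_mono rev_finite_subset)
    moreover have "k \<le> card T'" using kmin \<open>T' \<subset> T\<close> \<open>P T'\<close> T(1) by blast
    ultimately show False using T(3) by simp
  qed
  qed
qed

lemma part1:
  assumes wf: "wf_formula F n \<phi>" and av: "avoids F (NAND (d + 1))"
    and an: "assignment n a" and sn: "satisfies_nands a (phi_d n d \<phi>)"
  shows "satisfies a \<phi>"
  unfolding satisfies_def
proof
  fix c assume c: "c \<in> set \<phi>"
  obtain r f idx where cdef: "c = ((r, f), idx)" by (metis prod.collapse)
  have inF: "(r, f) \<in> F" and len: "length idx = r" and sub: "set idx \<subseteq> {..<n}"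
    using wf c cdef unfolding wf_formula_def by auto
  show "sat_constraint a c"
  proof (rule ccontr)
    assume nc: "\<not> sat_constraint a c"
    let ?A = "set idx \<inter> ones n a"
    let ?P = "\<lambda>T. \<not> f (map (\<lambda>i. i \<in> T) idx)"
    have eqA: "map (\<lambda>i. i \<in> ?A) idx = map a idx"
      using sub by (auto simp: ones_def)
    have "?P ?A" unfolding eqA using nc cdef by (simp add: sat_constraint_def)
    then obtain T where TA: "T \<subseteq> ?A" and PT: "?P T" and Tmin: "\<And>T'. T' \<subset> T \<Longrightarrow> \<not> ?P T'"
      using min_set[of ?A ?P] by blast
    have finT: "finite T" using TA by (meson finite_Int finite_set rev_finite_subset)
    show False
    proof (cases "card T \<le> d")
      case True
      define b where "b = (\<lambda>i. i \<in> T)"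
      have onesb: "ones n b = T" using TA sub unfolding ones_def b_def by auto
      have "b \<in> Fd n d \<phi>"
        unfolding Fd_def
      proof (intro CollectI conjI)
        show "assignment n b" using TA sub unfolding assignment_def b_def by auto
        show "weight n b \<le> d" using True onesb by (simp add: weight_def)
        show "\<not> satisfies b \<phi>" using c cdef PT
          unfolding satisfies_def sat_constraint_def b_def by (auto intro!: bexI[OF _ c])
      qed
      then have "T \<in> phi_d n d \<phi>" unfolding phi_d_def using onesb by force
      then have "nand_sat a T" using sn unfolding satisfies_nands_def by blast
      then show False using TA unfolding nand_sat_def ones_def by auto
    next
      case False
      define xs where "xs = sorted_list_of_set T"
      have xs: "distinct xs" "set xs = T" "length xs = card T"
        using finT by (auto simp: xs_def)
      define g where "g i = min (THE j. j < length xs \<and> xs ! j = i) d" for i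
      have gsurj: "\<exists>i\<in>T. g i = j" if "j \<le> d" for j
      proof -
        have jl: "j < length xs" using that False xs by simp
        have "xs ! j \<in> T" using jl xs by auto
        have "(THE j'. j' < length xs \<and> xs ! j' = xs ! j) = j"
          using jl xs(1) by (auto intro!: the_equality simp: nth_eq_iff_index_eq)
        then have "g (xs ! j) = j" using that by (simp add: g_def)
        moreover note \<open>xs ! j \<in> T\<close>
        ultimately show ?thesis by blast
      qed
      define \<sigma> where "\<sigma> p = (if idx ! p \<in> T then Inl (g (idx ! p)) else Inr False)" for p
      have "is_restriction (r, f) (NAND (d + 1))"
        unfolding is_restriction_def NAND_def
      unfolding prod.case proof (intro exI[of _ \<sigma>] conjI allI impI)
        fix p assume "p < r"
        show "case \<sigma> p of Inl j \<Rightarrow> j < d + 1 | Inr _ \<Rightarrow> True"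
          by (simp add: \<sigma>_def g_def min_def)
      next
        fix ys :: "bool list" assume ly: "length ys = d + 1"
        have eq: "map (\<lambda>p. case \<sigma> p of Inl j \<Rightarrow> ys ! j | Inr b \<Rightarrow> b) [0..<r]
              = map (\<lambda>i. i \<in> {i \<in> T. ys ! g i}) idx"
          unfolding len[symmetric]
          by (subst map_idx[symmetric]) (auto simp: \<sigma>_def)
        show "(\<not> (\<forall>y\<in>set ys. y)) = f (map (\<lambda>p. case \<sigma> p of Inl j \<Rightarrow> ys ! j | Inr b \<Rightarrow> b) [0..<r])"
          unfolding eq
        proof (cases "\<forall>y\<in>set ys. y")
          case True
          have "\<forall>i\<in>T. ys ! g i" using True ly by (auto simp: g_def)
          then have "{i \<in> T. ys ! g i} = T" by blast
          then show "(\<not> (\<forall>y\<in>set ys. y)) = f (map (\<lambda>i. i \<in> {i \<in> T. ys ! g i}) idx)"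
            using True PT by simp
        next
          case F: False
          then obtain j where j: "j < length ys" "\<not> ys ! j" by (metis in_set_conv_nth)
          then obtain i where "i \<in> T" "g i = j" using gsurj[of j] ly j(1) by (auto simp: less_Suc_eq_le)
          then have "{i \<in> T. ys ! g i} \<subset> T" using j by blast
          then show "(\<not> (\<forall>y\<in>set ys. y)) = f (map (\<lambda>i. i \<in> {i \<in> T. ys ! g i}) idx)"
            using F Tmin by blast
        qed
      qed
      then show False using av inF unfolding avoids_def by blast
    qed
  qed
qed

lemma part2:
  assumes "robust n d \<phi> a"
  shows "satisfies_nands a (phi_d n d \<phi>)"
  unfolding satisfies_nands_def phi_d_def
proof
  fix S assume "S \<in> ones n ` Fd n d \<phi>"
  then obtain b where b: "b \<in> Fd n d \<phi>" "S = ones n b" by blast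
  show "nand_sat a S"
  proof (rule ccontr)
    assume "\<not> nand_sat a S"
    then have all: "\<forall>i \<in> S. a i" by (simp add: nand_sat_def)
    have "le_assign b a" unfolding le_assign_def
    proof (intro allI impI)
      fix i assume "b i"
      moreover have "i < n" using b(1) \<open>b i\<close> unfolding Fd_def assignment_def
        using not_le by blast
      ultimately show "a i" using all b(2) unfolding ones_def by auto
    qed
    then show False using assms b(1) unfolding robust_def Fd_def by blast
  qed
qed

theorem mainTheorem7:
  fixes F :: "constr set" and \<phi> :: formula and n d :: nat
  assumes "d \<ge> 2" and "finite F" and "wf_formula F n \<phi>"
  shows "(avoids F (NAND (d + 1)) \<longrightarrow>
            (\<forall>a. assignment n a \<and> satisfies_nands a (phi_d n d \<phi>) \<longrightarrow> satisfies a \<phi>))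
       \<and> (\<forall>a. assignment n a \<and> robust n d \<phi> a \<longrightarrow> satisfies_nands a (phi_d n d \<phi>))"
  using part1[OF assms(3)] part2 by blast

end
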